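(* Let $M>0$, $m\in\mathbb{R}$ and let $n\ge2$ be an integer. Let $\mathcal{H}$ be the set of functions $h:\mathbb{R}\to[0,\infty)$ such that: (i) the support of $h$ (closure of $\{h>0\}$) is an interval $[0,b]$ for some $b>0$; (ii) $h$ is continuous and concave on $[0,b]$; (iii) $h(0)=1$ and the right derivative of $h$ at $0$ is $\le m$; (iv) with $f:=h^{n-1}$, $\int_0^b t f(t)\,dt=M$. Then $\mathcal{H}\neq\emptyset$ if and only if $m\ge -1/\sqrt{Mn(n+1)}$. In that case, setting $\mu(h):=\int_0^b f(t)\,dt$ for $h\in\mathcal{H}$: the minimum of $\mu$ over $\mathcal{H}$ is attained, and it is attained exactly at those $h$ which are affine on their support $[0,b]$ with $h(b)=0$; the maximum of $\mu$ over $\mathcal{H}$ is attained, and it is attained exactly at those $h$ with $h(t)=1+mt$ for all $t$ in the support of $h$. *)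

theory Defs
  imports "HOL-Analysis.Analysis"
begin

definition supp_pos :: "(real \<Rightarrow> real) \<Rightarrow> real set" where
  "supp_pos h = closure {t. h t > 0}"

definition H_class :: "real \<Rightarrow> real \<Rightarrow> nat \<Rightarrow> (real \<Rightarrow> real) set" where
  "H_class M m n = {h. (\<forall>t. h t \<ge> 0) \<and>
     (\<exists>b>0. supp_pos h = {0..b}
        \<and> continuous_on {0..b} h \<and> concave_on {0..b} h
        \<and> h 0 = 1
        \<and> (\<exists>d. (h has_real_derivative d) (at 0 within {0..b}) \<and> d \<le> m)
        \<and> integral {0..b} (\<lambda>t. t * h t ^ (n - 1)) = M)}"

definition mu :: "nat \<Rightarrow> (real \<Rightarrow> real) \<Rightarrow> real" where
  "mu n h = integral (supp_pos h) (\<lambda>t. h t ^ (n - 1))"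

end

theory Submission
  imports Defs
begin

lemma concave_tangent0:
  fixes h :: "real \<Rightarrow> real"
  assumes b: "b > 0" and conc: "concave_on {0..b} h"
    and der: "(h has_real_derivative d) (at 0 within {0..b})"
    and t: "t \<in> {0..b}"
  shows "h t \<le> h 0 + d * t"
proof (cases "t = 0")
  case True then show ?thesis by simp
next
  case False
  with t have t0: "0 < t" "t \<le> b" by auto
  have q: "(h t - h 0) / t \<le> (h s - h 0) / s" if s: "0 < s" "s \<le> t" for s
  proof -
    have "h ((1 - s/t) * 0 + (s/t) * t) \<ge> (1 - s/t) * h 0 + (s/t) * h t"
      using concave_onD[OF conc, of "s/t" 0 t] t0 s b by (auto simp: field_simps)
    then have "h s \<ge> (1 - s/t) * h 0 + (s/t) * h t" using t0 by simp
    then have "h s - h 0 \<ge> (s/t) * (h t - h 0)" by (simp add: algebra_simps)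
    then show ?thesis using s t0 by (simp add: field_simps)
  qed
  have lim: "((\<lambda>y. (h y - h 0) / (y - 0)) \<longlongrightarrow> d) (at_right 0)"
    using der b unfolding has_field_derivative_iff by (simp add: at_within_Icc_at_right)
  have ev: "eventually (\<lambda>y. (h t - h 0) / t \<le> (h y - h 0) / (y - 0)) (at_right 0)"
    unfolding eventually_at_right_field using t0 q by (intro exI[of _ t]) auto
  have "(h t - h 0) / t \<le> d"
    by (rule tendsto_lowerbound[OF lim ev]) simp
  then show ?thesis using t0 by (simp add: field_simps)
qed

lemma class_D:
  assumes hH: "h \<in> H_class M m n" and n: "n \<ge> 2"
  obtains b where "b > 0" "supp_pos h = {0..b}" "continuous_on {0..b} h" "concave_on {0..b} h"
    "h 0 = 1" "\<And>t. h t \<ge> 0" "\<And>t. t \<notin> {0..b} \<Longrightarrow> h t = 0"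
    "\<And>t. t \<in> {0..b} \<Longrightarrow> h t \<le> 1 + m * t"
    "\<And>t. t \<in> {0..<b} \<Longrightarrow> h t > 0"
    "((\<lambda>t. t * h t ^ (n-1)) has_integral M) {0..b}"
    "((\<lambda>t. h t ^ (n-1)) has_integral mu n h) {0..b}"
proof -
  from hH obtain b d where nn: "\<And>t. h t \<ge> 0" and b: "b > 0" and sp: "supp_pos h = {0..b}"
    and co: "continuous_on {0..b} h" and cc: "concave_on {0..b} h" and h0: "h 0 = 1"
    and der: "(h has_real_derivative d) (at 0 within {0..b})" and dm: "d \<le> m"
    and I: "integral {0..b} (\<lambda>t. t * h t ^ (n - 1)) = M"
    unfolding H_class_def by auto
  have out: "h t = 0" if "t \<notin> {0..b}" for t
  proof -
    have "{t. h t > 0} \<subseteq> supp_pos h" unfolding supp_pos_def by (rule closure_subset)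
    with that sp nn[of t] show ?thesis by force
  qed
  have up: "h t \<le> 1 + m * t" if "t \<in> {0..b}" for t
    using concave_tangent0[OF b cc der that] h0 dm that
    by (smt (verit, best) atLeastAtMost_iff mult_right_mono)
  have pos: "h t > 0" if "t \<in> {0..<b}" for t
  proof -
    have e: "(1 - t/b) * 0 + (t/b) * b = t" using b by simp
    have "h ((1 - t/b) * 0 + (t/b) * b) \<ge> (1 - t/b) * h 0 + (t/b) * h b"
      using concave_onD[OF cc, of "t/b" 0 b] that b by (auto simp: field_simps)
    then have A: "h t \<ge> (1 - t/b) + (t/b) * h b" unfolding e h0 by simp
    have "(t/b) * h b \<ge> 0" using nn[of b] that b by simp
    moreover have "t/b < 1" using that b by (simp add: field_simps)
    ultimately show ?thesis using A by linarith
  qed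
  have c1: "continuous_on {0..b} (\<lambda>t. t * h t ^ (n-1))"
    by (intro continuous_intros co)
  have c2: "continuous_on {0..b} (\<lambda>t. h t ^ (n-1))"
    by (intro continuous_intros co)
  have i1: "((\<lambda>t. t * h t ^ (n-1)) has_integral M) {0..b}"
    using integrable_continuous_real[OF c1] I by (metis has_integral_integrable_integral)
  have i2: "((\<lambda>t. h t ^ (n-1)) has_integral mu n h) {0..b}"
    using integrable_continuous_real[OF c2] unfolding mu_def sp
    by (metis has_integral_integrable_integral)
  show ?thesis
    by (rule that[OF b sp co cc h0 nn out up pos i1 i2])
qed

lemma int0_cont_zero:
  fixes w :: "real \<Rightarrow> real"
  assumes w0: "(w has_integral 0) {0..L}" and nn: "\<forall>t\<in>{0..L}. w t \<ge> 0"
    and ab: "0 \<le> \<alpha>" "\<alpha> < \<beta>" "\<beta> \<le> L" and co: "continuous_on {\<alpha>..\<beta>} w"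
    and x: "x \<in> {\<alpha>..\<beta>}"
  shows "w x = 0"
proof -
  have ia: "w integrable_on {\<alpha>..\<beta>}" using integrable_continuous_real[OF co] .
  have "integral {\<alpha>..\<beta>} w \<le> integral {0..L} w"
    using ab nn ia w0 by (intro integral_subset_le) (auto simp: has_integral_integrable)
  also have "\<dots> = 0" using w0 by (simp add: integral_unique)
  finally have le: "integral {\<alpha>..\<beta>} w \<le> 0" .
  have "integral {\<alpha>..\<beta>} w \<ge> 0" using nn ab ia by (intro integral_nonneg) auto
  with le have "integral (cbox \<alpha> \<beta>) w = 0" by simp
  moreover have "box \<alpha> \<beta> \<noteq> {}" using ab by simp
  ultimately show ?thesis using integral_cbox_eq_0_iff[of \<alpha> \<beta> w] co nn ab x by auto
qed

lemma cont_zero_but_one: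
  fixes f :: "real \<Rightarrow> real"
  assumes co: "continuous_on {a..b} f" and ab: "a < b"
    and z: "\<forall>t\<in>{a..b}. t \<noteq> c \<longrightarrow> f t = 0" and x: "x \<in> {a..b}"
  shows "f x = 0"
proof -
  let ?Z = "{t \<in> {a..b}. f t = 0}"
  have cl: "closed ?Z" by (rule continuous_closed_preimage_constant[OF co]) simp
  have "x islimpt {a..b}" using ab x by simp
  then have "x islimpt insert c ({a..b} - {c})" by (rule islimpt_subset) auto
  then have "x islimpt ({a..b} - {c})" using islimpt_insert by blast
  then have "x islimpt ?Z" by (rule islimpt_subset) (use z in auto)
  then have "x \<in> ?Z" using cl closed_limpt by blast
  then show ?thesis by simp
qed

lemma weight:
  fixes u v :: "real \<Rightarrow> real"
  assumes iu: "(u has_integral U) {0..L}" and iv: "(v has_integral V) {0..L}"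
    and itu: "((\<lambda>t. t * u t) has_integral I) {0..L}"
    and itv: "((\<lambda>t. t * v t) has_integral I) {0..L}"
    and c: "c > 0"
    and s1: "\<forall>t\<in>{0..L}. t < c \<longrightarrow> v t \<le> u t"
    and s2: "\<forall>t\<in>{0..L}. c < t \<longrightarrow> u t \<le> v t"
  shows "V \<le> U" and "((\<lambda>t. (u t - v t) * (1 - t/c)) has_integral (U - V)) {0..L}"
    and "\<forall>t\<in>{0..L}. (u t - v t) * (1 - t/c) \<ge> 0"
proof -
  have "((\<lambda>t. (u t - v t) - (1/c) * (t * u t - t * v t)) has_integral ((U - V) - (1/c) * (I - I))) {0..L}"
    by (intro has_integral_diff has_integral_mult_right iu iv itu itv)
  then show w: "((\<lambda>t. (u t - v t) * (1 - t/c)) has_integral (U - V)) {0..L}"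
    by (rule has_integral_eq_rhs[OF has_integral_cong[THEN iffD1, rotated]]) (use c in \<open>auto simp: field_simps\<close>)
  show nnw: "\<forall>t\<in>{0..L}. (u t - v t) * (1 - t/c) \<ge> 0"
  proof
    fix t assume t: "t \<in> {0..L}"
    consider "t < c" | "t = c" | "c < t" by linarith
    then show "(u t - v t) * (1 - t/c) \<ge> 0"
    proof cases
      case 1 then have "1 - t/c \<ge> 0" using c by (simp add: field_simps)
      then show ?thesis using s1 t 1 by simp
    next
      case 2 then show ?thesis using c by simp
    next
      case 3 then have "1 - t/c \<le> 0" using c by (simp add: field_simps)
      then show ?thesis using s2 t 3 by (simp add: mult_nonpos_nonpos)
    qed
  qed
  then have "U - V \<ge> 0" using has_integral_nonneg[OF w] nnw by auto
  then show "V \<le> U" by simp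
qed

lemma ftc_poly:
  fixes c \<alpha> \<beta> :: real and p :: nat
  assumes c: "c \<noteq> 0" and ab: "\<alpha> \<le> \<beta>"
  defines "F \<equiv> \<lambda>t. ((1 + c*t)^(p+2) / real (p+2) - (1 + c*t)^(p+1) / real (p+1)) / c^2"
  shows "((\<lambda>t. t * (1 + c*t)^p) has_integral (F \<beta> - F \<alpha>)) {\<alpha>..\<beta>}"
proof -
  have pw: "((\<lambda>t. (1 + c*t)^k) has_real_derivative real k * (1+c*t)^(k - 1) * c) (at t)" for k t
    by (auto intro!: derivative_eq_intros)
  have d: "(F has_real_derivative t * (1 + c*t)^p) (at t)" for t
  proof -
    have "(F has_real_derivative
       ((real (p+2) * (1 + c*t)^(p+1) * c) / real (p+2) - (real (p+1) * (1 + c*t)^p * c) / real (p+1)) / c^2) (at t)"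
      unfolding F_def using pw[of "p+2" t] pw[of "p+1" t]
      by (intro DERIV_cdivide DERIV_diff DERIV_cdivide) auto
    moreover have "((real (p+2) * (1 + c*t)^(p+1) * c) / real (p+2) - (real (p+1) * (1 + c*t)^p * c) / real (p+1)) / c^2
        = t * (1 + c*t)^p"
    proof -
      have "((real (p+2) * (1 + c*t)^(p+1) * c) / real (p+2) - (real (p+1) * (1 + c*t)^p * c) / real (p+1))
         = (1 + c*t)^(p+1) * c - (1 + c*t)^p * c"
        by (simp del: of_nat_add of_nat_Suc)
      also have "\<dots> = c^2 * (t * (1 + c*t)^p)" by (simp add: algebra_simps power2_eq_square)
      finally show ?thesis using c by simp
    qed
    ultimately show ?thesis by simp
  qed
  show ?thesis
    by (rule fundamental_theorem_of_calculus[OF ab])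
       (auto intro: has_field_derivative_at_within d simp: has_real_derivative_iff_has_vector_derivative[symmetric])
qed

definition lin :: "real \<Rightarrow> real \<Rightarrow> real \<Rightarrow> real" where
  "lin c B t = (if t \<in> {0..B} then 1 + c * t else 0)"

lemma lin_class:
  assumes B: "B > 0" and pos: "\<And>t. t \<in> {0..<B} \<Longrightarrow> 1 + c * t > 0" and Bnn: "1 + c * B \<ge> 0"
    and cm: "c \<le> m" and I: "((\<lambda>t. t * (1 + c*t)^(n-1)) has_integral M) {0..B}"
  shows "lin c B \<in> H_class M m n"
proof -
  have nn: "lin c B t \<ge> 0" for t
    using pos[of t] Bnn by (cases "t = B") (auto simp: lin_def)
  have s1: "{0..<B} \<subseteq> {t. lin c B t > 0}" using pos by (auto simp: lin_def)
  have s2: "{t. lin c B t > 0} \<subseteq> {0..B}" by (auto simp: lin_def split: if_splits)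
  have "closure {0..<B} \<subseteq> closure {t. lin c B t > 0}" using s1 by (rule closure_mono)
  moreover have "closure {t. lin c B t > 0} \<subseteq> closure {0..B}" using s2 by (rule closure_mono)
  ultimately have sp: "supp_pos (lin c B) = {0..B}" using B unfolding supp_pos_def by auto
  have co: "continuous_on {0..B} (lin c B)"
  proof -
    have "continuous_on {0..B} (\<lambda>t. 1 + c*t)" by (intro continuous_intros)
    then show ?thesis by (rule continuous_on_cong[THEN iffD1, OF refl, rotated]) (auto simp: lin_def)
  qed
  have cc: "concave_on {0..B} (lin c B)"
    unfolding concave_on_iff
  proof (intro conjI ballI allI impI)
    fix x y u v :: real assume xy: "x \<in> {0..B}" "y \<in> {0..B}" and uv: "u \<ge> 0" "v \<ge> 0" "u + v = 1"
    have "u * x + v * y \<in> {0..B}"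
    proof -
      have "u * x + v * y \<le> u * B + v * B" using xy uv by (intro add_mono mult_left_mono) auto
      then show ?thesis using xy uv uv(3) by (auto simp: distrib_right[symmetric])
    qed
    then have "lin c B (u *\<^sub>R x + v *\<^sub>R y) = u * (1 + c * x) + v * (1 + c * y)"
      using uv by (simp add: lin_def algebra_simps)
    then show "lin c B (u *\<^sub>R x + v *\<^sub>R y) \<ge> u * lin c B x + v * lin c B y"
      using xy by (simp add: lin_def)
  qed simp
  have der: "(lin c B has_real_derivative c) (at 0 within {0..B})"
    by (rule has_field_derivative_transform_within[of "\<lambda>t. 1 + c * t" c 0 "{0..B}" 1])
       (use B in \<open>auto intro!: derivative_eq_intros simp: lin_def\<close>)
  have "integral {0..B} (\<lambda>t. t * lin c B t ^ (n - 1)) = integral {0..B} (\<lambda>t. t * (1 + c*t)^(n-1))"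
    by (rule integral_cong) (simp add: lin_def)
  also have "\<dots> = M" using I by (simp add: integral_unique)
  finally have "integral {0..B} (\<lambda>t. t * lin c B t ^ (n - 1)) = M" .
  then show ?thesis unfolding H_class_def
    using nn B sp co cc der cm by (auto simp: lin_def)
qed

lemma int_neg:
  fixes c :: real and p :: nat
  assumes c: "c < 0"
  shows "((\<lambda>t. t * (1 + c*t)^p) has_integral 1 / (c^2 * (real p + 1) * (real p + 2))) {0..-1/c}"
proof -
  have ab: "0 \<le> -1/c" using c by (simp add: field_simps)
  have e: "1 + c * (-1/c) = 0" using c by (simp add: field_simps)
  have "((\<lambda>t. t * (1 + c*t)^p) has_integral
      (((1 + c*(-1/c))^(p+2) / real (p+2) - (1 + c*(-1/c))^(p+1) / real (p+1)) / c^2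
      - ((1 + c*0)^(p+2) / real (p+2) - (1 + c*0)^(p+1) / real (p+1)) / c^2)) {0..-1/c}"
    using ftc_poly[of c 0 "-1/c" p] c ab by simp
  moreover have "(((1 + c*(-1/c))^(p+2) / real (p+2) - (1 + c*(-1/c))^(p+1) / real (p+1)) / c^2
      - ((1 + c*0)^(p+2) / real (p+2) - (1 + c*0)^(p+1) / real (p+1)) / c^2)
      = 1 / (c^2 * (real p + 1) * (real p + 2))"
    unfolding e using c by (simp add: field_simps)
  ultimately show ?thesis by simp
qed

lemma int_min:
  fixes B :: real and p :: nat
  assumes B: "B > 0"
  shows "((\<lambda>t. t * (1 + (-1/B)*t)^p) has_integral B^2 / ((real p + 1) * (real p + 2))) {0..B}"
proof -
  have "-1/B < 0" using B by simp
  from int_neg[OF this, of p] have "((\<lambda>t. t * (1 + (-1/B)*t)^p) has_integral 1 / ((-1/B)^2 * (real p + 1) * (real p + 2))) {0..B}"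
    using B by simp
  moreover have "1 / ((-1/B)^2 * (real p + 1) * (real p + 2)) = B^2 / ((real p + 1) * (real p + 2))"
    using B by (simp add: field_simps power2_eq_square)
  ultimately show ?thesis by simp
qed

lemma int_id:
  fixes X :: real assumes "X \<ge> 0"
  shows "((\<lambda>t. t) has_integral X^2/2) {0..X}"
proof -
  have "((\<lambda>t. t) has_integral (X^2/2 - 0^2/2)) {0..X}"
    by (rule fundamental_theorem_of_calculus[OF assms])
       (auto intro!: derivative_eq_intros simp: has_real_derivative_iff_has_vector_derivative[symmetric])
  then show ?thesis by simp
qed

lemma exists_B1:
  fixes M m :: real and n :: nat
  assumes M: "M > 0" and n: "n \<ge> 2"
    and mm: "m \<ge> - 1 / sqrt (M * real n * (real n + 1))"
  obtains B1 where "B1 > 0" "\<And>t. t \<in> {0..<B1} \<Longrightarrow> 1 + m * t > 0" "1 + m * B1 \<ge> 0"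
    "((\<lambda>t. t * (1 + m*t)^(n-1)) has_integral M) {0..B1}"
proof -
  define f where "f = (\<lambda>t. t * (1 + m*t)^(n-1))"
  define G where "G = (\<lambda>x. integral {0..x} f)"
  have cf: "continuous_on S f" for S unfolding f_def by (intro continuous_intros)
  obtain X where X: "X \<ge> 0" "G X \<ge> M" "m < 0 \<Longrightarrow> X = -1/m"
  proof (cases "m < 0")
    case True
    define K where "K = M * real n * (real n + 1)"
    have K: "K > 0" using M n by (simp add: K_def)
    have "-m \<le> 1 / sqrt K" using mm unfolding K_def by simp
    then have "(-m) * sqrt K \<le> 1" using K by (simp add: field_simps)
    then have "((-m) * sqrt K)^2 \<le> 1^2" using True K
      by (intro power_mono) (auto simp: mult_nonpos_nonneg)
    then have mk: "m^2 * K \<le> 1" using K by (simp add: power_mult_distrib)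
    have g1: "G (-1/m) = 1 / (m^2 * (real (n-1) + 1) * (real (n-1) + 2))"
      unfolding G_def f_def using int_neg[OF True, of "n-1"] by (simp add: integral_unique)
    have "(real (n-1) + 1) * (real (n-1) + 2) = real n * (real n + 1)" using n
      by (simp add: of_nat_diff)
    with g1 have "G (-1/m) = 1 / (m^2 * (real n * (real n + 1)))" by (simp add: mult.assoc)
    moreover have "M \<le> 1 / (m^2 * (real n * (real n + 1)))"
    proof -
      have D: "m^2 * (real n * (real n + 1)) > 0" using True n by simp
      have "M * (m^2 * (real n * (real n + 1))) \<le> 1" using mk unfolding K_def by (simp add: algebra_simps)
      then show ?thesis using D by (simp add: pos_le_divide_eq)
    qed
    ultimately show ?thesis using that[of "-1/m"] True by (simp add: field_simps)
  next
    case False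
    define X where "X = sqrt (2*M)"
    have X0: "X \<ge> 0" unfolding X_def using M by simp
    have "integral {0..X} (\<lambda>t. t) \<le> integral {0..X} f"
    proof (rule integral_le)
      show "(\<lambda>t. t) integrable_on {0..X}" using int_id[OF X0] by blast
      show "f integrable_on {0..X}" using cf by (rule integrable_continuous_real)
      fix t assume t: "t \<in> {0..X}"
      have "1 \<le> (1 + m*t)^(n-1)" using False t by (intro one_le_power) auto
      then show "t \<le> f t" unfolding f_def using t mult_left_mono[of 1 "(1 + m*t)^(n-1)" t] by auto
    qed
    moreover have "integral {0..X} (\<lambda>t. t) = M"
      using int_id[OF X0] M unfolding X_def by (simp add: integral_unique)
    ultimately show ?thesis using that[of X] X0 False unfolding G_def by auto
  qed
  have "continuous_on {0..X} G" unfolding G_def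
    by (rule indefinite_integral_continuous_1) (rule integrable_continuous_real[OF cf])
  moreover have "G 0 \<le> M" using M by (simp add: G_def)
  ultimately obtain B1 where B1: "0 \<le> B1" "B1 \<le> X" "G B1 = M" using IVT'[of G 0 M X] X by auto
  have "B1 \<noteq> 0" using B1 M by (auto simp: G_def)
  with B1 have B1p: "B1 > 0" by simp
  have pos: "1 + m * t > 0" if "t \<in> {0..<B1}" for t
  proof (cases "m < 0")
    case True
    then have "t < -1/m" using that B1 X by auto
    then show ?thesis using True by (simp add: field_simps)
  next
    case False then show ?thesis using that by (simp add: add_pos_nonneg)
  qed
  have nn: "1 + m * B1 \<ge> 0"
  proof (cases "m < 0")
    case True
    then have "B1 \<le> -1/m" using B1 X by auto
    then show ?thesis using True by (simp add: field_simps)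
  next
    case False then show ?thesis using B1 by simp
  qed
  have "(f has_integral M) {0..B1}"
    using integrable_continuous_real[OF cf, of 0 B1] B1(3) unfolding G_def
    by (metis has_integral_integrable_integral)
  then show ?thesis using that[OF B1p pos nn] unfolding f_def by simp
qed

lemma ext_int:
  fixes f :: "real \<Rightarrow> real"
  assumes "(f has_integral I) {0..b}" "\<And>t. t \<notin> {0..b} \<Longrightarrow> f t = 0" "b \<le> L"
  shows "(f has_integral I) {0..L}"
  by (rule has_integral_on_superset[OF assms(1)]) (use assms in auto)

lemma pairB:
  assumes n: "n \<ge> 2" and HH: "H \<in> H_class M m n" and Hl: "\<forall>t\<in>supp_pos H. H t = 1 + m*t"
    and gH: "g \<in> H_class M m n"
  shows "mu n g \<le> mu n H" and "mu n g = mu n H \<Longrightarrow> \<forall>t\<in>supp_pos g. g t = 1 + m*t"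
proof -
  obtain bH where bH: "bH > 0" and Hsp: "supp_pos H = {0..bH}" and Hco: "continuous_on {0..bH} H"
    and Hcc: "concave_on {0..bH} H" and H0: "H 0 = 1"
    and Hnn: "\<And>t. H t \<ge> 0" and Hout: "\<And>t. t \<notin> {0..bH} \<Longrightarrow> H t = 0"
    and Hup: "\<And>t. t \<in> {0..bH} \<Longrightarrow> H t \<le> 1 + m * t"
    and Hpos: "\<And>t. t \<in> {0..<bH} \<Longrightarrow> H t > 0"
    and HiM: "((\<lambda>t. t * H t ^ (n-1)) has_integral M) {0..bH}"
    and Himu: "((\<lambda>t. H t ^ (n-1)) has_integral mu n H) {0..bH}"
    by (rule class_D[OF HH n]) blast
  obtain bg where bg: "bg > 0" and gsp: "supp_pos g = {0..bg}" and gco: "continuous_on {0..bg} g"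
    and gcc: "concave_on {0..bg} g" and g0: "g 0 = 1"
    and gnn: "\<And>t. g t \<ge> 0" and gout: "\<And>t. t \<notin> {0..bg} \<Longrightarrow> g t = 0"
    and gup: "\<And>t. t \<in> {0..bg} \<Longrightarrow> g t \<le> 1 + m * t"
    and gpos: "\<And>t. t \<in> {0..<bg} \<Longrightarrow> g t > 0"
    and giM: "((\<lambda>t. t * g t ^ (n-1)) has_integral M) {0..bg}"
    and gimu: "((\<lambda>t. g t ^ (n-1)) has_integral mu n g) {0..bg}"
    by (rule class_D[OF gH n]) blast
  have p: "n - 1 > 0" using n by simp
  have zp: "(0::real) ^ (n-1) = 0" using n by simp
  have Hl': "H t = 1 + m * t" if "t \<in> {0..bH}" for t using Hl Hsp that by auto
  define L where "L = max bH bg"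
  have iu: "((\<lambda>t. H t ^ (n-1)) has_integral mu n H) {0..L}"
    by (rule ext_int[OF Himu]) (use Hout p L_def in auto)
  have iv: "((\<lambda>t. g t ^ (n-1)) has_integral mu n g) {0..L}"
    by (rule ext_int[OF gimu]) (use gout p L_def in auto)
  have itu: "((\<lambda>t. t * H t ^ (n-1)) has_integral M) {0..L}"
    by (rule ext_int[OF HiM]) (use Hout p L_def in auto)
  have itv: "((\<lambda>t. t * g t ^ (n-1)) has_integral M) {0..L}"
    by (rule ext_int[OF giM]) (use gout p L_def in auto)
  have s1: "\<forall>t\<in>{0..L}. t < bH \<longrightarrow> g t ^ (n-1) \<le> H t ^ (n-1)"
  proof (intro ballI impI)
    fix t assume t: "t \<in> {0..L}" "t < bH"
    show "g t ^ (n-1) \<le> H t ^ (n-1)"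
    proof (cases "t \<le> bg")
      case True
      then have "g t \<le> H t" using gup[of t] Hl'[of t] t by auto
      then show ?thesis using gnn by (intro power_mono) auto
    next
      case False then show ?thesis using gout[of t] p Hnn by auto
    qed
  qed
  have s2: "\<forall>t\<in>{0..L}. bH < t \<longrightarrow> H t ^ (n-1) \<le> g t ^ (n-1)"
    using Hout p gnn by auto
  note W = weight[OF iu iv itu itv bH s1 s2]
  show "mu n g \<le> mu n H" by (rule W(1))
  assume eq: "mu n g = mu n H"
  define w where "w = (\<lambda>t. (H t ^ (n-1) - g t ^ (n-1)) * (1 - t/bH))"
  have w0: "(w has_integral 0) {0..L}" using W(2) eq unfolding w_def by simp
  have wnn: "\<forall>t\<in>{0..L}. w t \<ge> 0" using W(3) unfolding w_def by simp
  have le: "bg \<le> bH"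
  proof (rule ccontr)
    assume "\<not> bg \<le> bH"
    then have lt: "bH < bg" by simp
    define \<alpha> where "\<alpha> = (bH + bg)/2"
    have co: "continuous_on {\<alpha>..bg} w"
    proof -
      have "continuous_on {\<alpha>..bg} (\<lambda>t. (0 - g t ^ (n-1)) * (1 - t/bH))"
        by (intro continuous_intros continuous_on_subset[OF gco]) (use lt bH \<alpha>_def in auto)
      then show ?thesis
        by (rule continuous_on_cong[THEN iffD1, OF refl, rotated]) (use Hout lt \<alpha>_def w_def n in \<open>auto simp: power_0_left\<close>)
    qed
    define x where "x = (\<alpha> + bg)/2"
    have x: "x \<in> {\<alpha>..bg}" "x < bg" "bH < x" using lt unfolding x_def \<alpha>_def by (auto simp: field_simps)
    have "w x = 0"
      by (rule int0_cont_zero[OF w0 wnn _ _ _ co x(1)]) (use lt bH \<alpha>_def L_def in auto)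
    moreover have "w x > 0"
    proof -
      have "g x > 0" using gpos[of x] x bH lt by auto
      then have "g x ^ (n-1) > 0" by simp
      moreover have "1 - x/bH < 0" using x bH by (simp add: field_simps)
      moreover have "H x = 0" using Hout x by auto
      ultimately have "(0 - g x ^ (n-1)) * (1 - x/bH) > 0" by (intro mult_neg_neg) auto
      then show ?thesis unfolding w_def using \<open>H x = 0\<close> n by (simp add: power_0_left)
    qed
    ultimately show False by simp
  qed
  have wz: "w t = 0" if "t \<in> {0..bg}" for t
  proof -
    have co: "continuous_on {0..bg} w" unfolding w_def
      by (intro continuous_intros continuous_on_subset[OF gco] continuous_on_subset[OF Hco]) (use le bH in auto)
    show ?thesis by (rule int0_cont_zero[OF w0 wnn _ _ _ co that]) (use bg L_def in auto)
  qed
  have "g t - (1 + m*t) = 0" if "t \<in> {0..bg}" for t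
  proof (rule cont_zero_but_one[where a=0 and b=bg and c=bH and f="\<lambda>t. g t - (1+m*t)" and x=t])
    show "continuous_on {0..bg} (\<lambda>t. g t - (1 + m * t))" by (intro continuous_intros gco)
    show "0 < bg" by (rule bg)
    show "t \<in> {0..bg}" by (rule that)
    show "\<forall>t\<in>{0..bg}. t \<noteq> bH \<longrightarrow> g t - (1 + m * t) = 0"
    proof (intro ballI impI)
      fix s assume s: "s \<in> {0..bg}" "s \<noteq> bH"
      have "1 - s/bH \<noteq> 0" using s bH by (simp add: field_simps)
      then have "H s ^ (n-1) = g s ^ (n-1)" using wz[OF s(1)] unfolding w_def using s bH by simp
      then have "H s = g s" using Hnn gnn p by (metis power_eq_imp_eq_base)
      then show "g s - (1 + m * s) = 0" using Hl'[of s] s le by auto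
    qed
  qed
  then show "\<forall>t\<in>supp_pos g. g t = 1 + m*t" using gsp by auto
qed

lemma pairA:
  assumes n: "n \<ge> 2" and B: "B > 0" and lH: "lin (-1/B) B \<in> H_class M m n"
    and gH: "g \<in> H_class M m n"
  shows "mu n (lin (-1/B) B) \<le> mu n g \<and> (mu n g = mu n (lin (-1/B) B) \<longrightarrow> supp_pos g = {0..B} \<and> (\<forall>t\<in>{0..B}. g t = 1 + (-1/B)*t))"
proof -
  define l where "l = lin (-1/B) B"
  have lval: "l t = 1 + (-1/B) * t" if "t \<in> {0..B}" for t using that by (simp add: l_def lin_def)
  have lout: "l t = 0" if "t \<notin> {0..B}" for t using that by (auto simp: l_def lin_def)
  have lH': "l \<in> H_class M m n" using lH l_def by simp
  obtain bl where bl: "bl > 0" and lsp: "supp_pos l = {0..bl}" and lco: "continuous_on {0..bl} l"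
    and lcc: "concave_on {0..bl} l" and l0: "l 0 = 1"
    and lnn: "\<And>t. l t \<ge> 0" and lout': "\<And>t. t \<notin> {0..bl} \<Longrightarrow> l t = 0"
    and lup: "\<And>t. t \<in> {0..bl} \<Longrightarrow> l t \<le> 1 + m * t"
    and lpos: "\<And>t. t \<in> {0..<bl} \<Longrightarrow> l t > 0"
    and liM: "((\<lambda>t. t * l t ^ (n-1)) has_integral M) {0..bl}"
    and limu: "((\<lambda>t. l t ^ (n-1)) has_integral mu n l) {0..bl}"
    by (rule class_D[OF lH' n]) blast
  obtain bg where bg: "bg > 0" and gsp: "supp_pos g = {0..bg}" and gco: "continuous_on {0..bg} g"
    and gcc: "concave_on {0..bg} g" and g0: "g 0 = 1"
    and gnn: "\<And>t. g t \<ge> 0" and gout: "\<And>t. t \<notin> {0..bg} \<Longrightarrow> g t = 0"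
    and gup: "\<And>t. t \<in> {0..bg} \<Longrightarrow> g t \<le> 1 + m * t"
    and gpos: "\<And>t. t \<in> {0..<bg} \<Longrightarrow> g t > 0"
    and giM: "((\<lambda>t. t * g t ^ (n-1)) has_integral M) {0..bg}"
    and gimu: "((\<lambda>t. g t ^ (n-1)) has_integral mu n g) {0..bg}"
    by (rule class_D[OF gH n]) blast
  have blB: "bl = B"
  proof (rule ccontr)
    assume "bl \<noteq> B"
    then consider "bl < B" | "B < bl" by linarith
    then show False
    proof cases
      case 1
      define x where "x = (bl + B)/2"
      have x: "x \<notin> {0..bl}" "x \<in> {0..B}" "x < B" using 1 bl unfolding x_def by auto
      have "l x = 0" using lout' x by simp
      moreover have "l x = 1 + (-1/B) * x" using lval x by simp
      moreover have "(-1/B) * x > -1" using x B by (simp add: field_simps)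
      ultimately show False by simp
    next
      case 2
      define x where "x = (bl + B)/2"
      have x: "x \<in> {0..<bl}" "x \<notin> {0..B}" using 2 B unfolding x_def by auto
      then show False using lpos[of x] lout[of x] by simp
    qed
  qed
  have lco': "continuous_on {0..B} l" using lco blB by simp
  have p: "n - 1 > 0" using n by simp
  have zp: "\<And>x::real. x = 0 \<Longrightarrow> x ^ (n-1) = 0" using n by simp
  define L where "L = max B bg"
  have iu: "((\<lambda>t. g t ^ (n-1)) has_integral mu n g) {0..L}"
    by (rule ext_int[OF gimu]) (use gout zp L_def in auto)
  have iv: "((\<lambda>t. l t ^ (n-1)) has_integral mu n l) {0..L}"
    by (rule ext_int[OF limu]) (use lout' zp L_def blB in auto)
  have itu: "((\<lambda>t. t * g t ^ (n-1)) has_integral M) {0..L}"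
    by (rule ext_int[OF giM]) (use gout zp L_def in auto)
  have itv: "((\<lambda>t. t * l t ^ (n-1)) has_integral M) {0..L}"
    by (rule ext_int[OF liM]) (use lout' zp L_def blB in auto)
  have P: "g t2 \<le> l t2" if t: "t1 \<in> {0..L}" "t2 \<in> {0..L}" "t1 \<le> t2" "g t1 < l t1" for t1 t2
  proof (cases "t2 \<le> bg")
    case False then show ?thesis using gout[of t2] lnn[of t2] by auto
  next
    case True
    have t1B: "t1 \<le> B"
    proof (rule ccontr)
      assume "\<not> t1 \<le> B" then have "l t1 = 0" using lout by auto
      then show False using t gnn[of t1] by simp
    qed
    have t10: "t1 > 0"
    proof (rule ccontr)
      assume "\<not> t1 > 0" then have "t1 = 0" using t by auto
      then show False using t g0 l0 by simp
    qed
    show ?thesis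
    proof (rule ccontr)
      assume "\<not> g t2 \<le> l t2"
      then have gt: "g t2 > l t2" by simp
      have lt2: "l t2 \<ge> 1 - t2/B"
      proof (cases "t2 \<le> B")
        case True then show ?thesis using lval[of t2] t by simp
      next
        case False then have "1 - t2/B \<le> 0" using B by (simp add: field_simps)
        then show ?thesis using lnn[of t2] by simp
      qed
      have t20: "t2 > 0" using t10 t by simp
      have e: "(1 - t1/t2) * 0 + (t1/t2) * t2 = t1" using t20 by simp
      have "g ((1 - t1/t2) * 0 + (t1/t2) * t2) \<ge> (1 - t1/t2) * g 0 + (t1/t2) * g t2"
        using concave_onD[OF gcc, of "t1/t2" 0 t2] t t20 t10 True by (auto simp: field_simps)
      then have A: "g t1 \<ge> (1 - t1/t2) + (t1/t2) * g t2" unfolding e g0 by simp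
      have "(t1/t2) * g t2 > (t1/t2) * (1 - t2/B)"
        using gt lt2 t10 t20 by (intro mult_strict_left_mono) auto
      moreover have "(1 - t1/t2) + (t1/t2) * (1 - t2/B) = 1 - t1/B" using t20 B by (simp add: field_simps)
      moreover have "l t1 = 1 - t1/B" using lval[of t1] t t1B by simp
      ultimately show False using A t(4) by linarith
    qed
  qed
  define S where "S = {t \<in> {0..L}. l t < g t}"
  have main: "mu n l \<le> mu n g \<and> (mu n g = mu n l \<longrightarrow> supp_pos g = {0..B} \<and> (\<forall>t\<in>{0..B}. g t = 1 + (-1/B)*t))"
  proof (cases "S = {}")
    case True
    then have gle: "g t \<le> l t" if "t \<in> {0..L}" for t using that unfolding S_def by force
    have bgB: "bg \<le> B"
    proof (rule ccontr)
      assume "\<not> bg \<le> B"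
      define x where "x = (B + bg)/2"
      have x: "x \<in> {0..<bg}" "x \<notin> {0..B}" "x \<in> {0..L}" using \<open>\<not> bg \<le> B\<close> B unfolding x_def L_def by auto
      then show False using gle[of x] gpos[of x] lout[of x] by simp
    qed
    define w where "w = (\<lambda>t. t * l t ^ (n-1) - t * g t ^ (n-1))"
    have w0: "(w has_integral 0) {0..L}" using has_integral_diff[OF itv itu] unfolding w_def by simp
    have wnn: "\<forall>t\<in>{0..L}. w t \<ge> 0"
    proof
      fix t assume t: "t \<in> {0..L}"
      have "g t ^ (n-1) \<le> l t ^ (n-1)" using gle[OF t] gnn by (intro power_mono) auto
      then show "w t \<ge> 0" unfolding w_def using t by (simp add: mult_left_mono)
    qed
    have geq: "g t = l t" if t: "t \<in> {0..bg}" for t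
    proof (cases "t = 0")
      case True then show ?thesis using g0 l0 by simp
    next
      case False
      have co: "continuous_on {0..bg} w" unfolding w_def
        by (intro continuous_intros continuous_on_subset[OF gco] continuous_on_subset[OF lco']) (use bgB in auto)
      have "w t = 0" by (rule int0_cont_zero[OF w0 wnn _ _ _ co t]) (use bg L_def in auto)
      then have "l t ^ (n-1) = g t ^ (n-1)" using False t unfolding w_def by simp
      then show ?thesis using lnn gnn p by (metis power_eq_imp_eq_base)
    qed
    have bgB': "bg = B"
    proof (rule ccontr)
      assume "bg \<noteq> B" then have lt: "bg < B" using bgB by simp
      define \<alpha> where "\<alpha> = (bg + B)/2"
      have co: "continuous_on {\<alpha>..B} w"
      proof -
        have "continuous_on {\<alpha>..B} (\<lambda>t. t * l t ^ (n-1))"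
          by (intro continuous_intros continuous_on_subset[OF lco']) (use lt bg \<alpha>_def in auto)
        then show ?thesis
          by (rule continuous_on_cong[THEN iffD1, OF refl, rotated]) (use gout lt \<alpha>_def w_def n in \<open>auto simp: power_0_left\<close>)
      qed
      define x where "x = (\<alpha> + B)/2"
      have x: "x \<in> {\<alpha>..B}" "x < B" "bg < x" using lt unfolding x_def \<alpha>_def by (auto simp: field_simps)
      have "w x = 0"
        by (rule int0_cont_zero[OF w0 wnn _ _ _ co x(1)]) (use lt bg \<alpha>_def L_def in auto)
      moreover have "w x > 0"
      proof -
        have "l x > 0" using lpos[of x] x bg blB by auto
        moreover have "g x = 0" using gout x by auto
        ultimately show ?thesis unfolding w_def using x bg n by (simp add: power_0_left)
      qed
      ultimately show False by simp
    qed
    have "((\<lambda>t. g t ^ (n-1)) has_integral mu n l) {0..B} \<longleftrightarrow> ((\<lambda>t. l t ^ (n-1)) has_integral mu n l) {0..B}"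
      by (rule has_integral_cong) (use geq bgB' in auto)
    then have "((\<lambda>t. g t ^ (n-1)) has_integral mu n l) {0..B}" using limu blB by simp
    then have "mu n g = mu n l" using gimu bgB' by (simp add: has_integral_unique)
    then show ?thesis using gsp bgB' geq lval by auto
  next
    case False
    have bdd: "bdd_above S" unfolding S_def by (rule bdd_aboveI[of _ L]) auto
    have Spos: "s > 0" "s \<le> bg" if "s \<in> S" for s
    proof -
      have s: "s \<in> {0..L}" "l s < g s" using that S_def by auto
      then show "s > 0" using g0 l0 by (cases "s = 0") auto
      show "s \<le> bg" using s gout[of s] lnn[of s] by (cases "s \<in> {0..bg}") auto
    qed
    define c where "c = Sup S"
    obtain s0 where s0: "s0 \<in> S" using False by auto
    have c0: "c > 0" using cSup_upper[OF s0 bdd] Spos(1)[OF s0] unfolding c_def by simp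
    have cbg: "c \<le> bg" unfolding c_def using False Spos(2) by (intro cSup_least) auto
    have s1: "\<forall>t\<in>{0..L}. t < c \<longrightarrow> l t ^ (n-1) \<le> g t ^ (n-1)"
    proof (intro ballI impI)
      fix t assume t: "t \<in> {0..L}" "t < c"
      then obtain s where s: "s \<in> S" "t < s" using less_cSup_iff[OF False bdd] unfolding c_def by auto
      have "l t \<le> g t"
      proof (rule ccontr)
        assume "\<not> l t \<le> g t"
        then have "g s \<le> l s" using P[of t s] t s S_def by auto
        then show False using s S_def by auto
      qed
      then show "l t ^ (n-1) \<le> g t ^ (n-1)" using lnn by (intro power_mono) auto
    qed
    have s2: "\<forall>t\<in>{0..L}. c < t \<longrightarrow> g t ^ (n-1) \<le> l t ^ (n-1)"
    proof (intro ballI impI)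
      fix t assume t: "t \<in> {0..L}" "c < t"
      have "t \<notin> S" using cSup_upper[OF _ bdd, of t] t unfolding c_def by auto
      then have "g t \<le> l t" using t S_def by auto
      then show "g t ^ (n-1) \<le> l t ^ (n-1)" using gnn by (intro power_mono) auto
    qed
    note W = weight[OF iu iv itu itv c0 s1 s2]
    have "mu n g = mu n l \<longrightarrow> supp_pos g = {0..B} \<and> (\<forall>t\<in>{0..B}. g t = 1 + (-1/B)*t)"
    proof
      assume eq: "mu n g = mu n l"
      define w where "w = (\<lambda>t. (g t ^ (n-1) - l t ^ (n-1)) * (1 - t/c))"
      have w0: "(w has_integral 0) {0..L}" using W(2) eq unfolding w_def by simp
      have wnn: "\<forall>t\<in>{0..L}. w t \<ge> 0" using W(3) unfolding w_def by simp
      define m1 where "m1 = min bg B"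
      have m1: "m1 > 0" "m1 \<le> bg" "m1 \<le> B" using bg B unfolding m1_def by auto
      have wz: "w t = 0" if "t \<in> {0..m1}" for t
      proof -
        have co: "continuous_on {0..m1} w" unfolding w_def
          by (intro continuous_intros continuous_on_subset[OF gco] continuous_on_subset[OF lco']) (use m1 c0 in auto)
        show ?thesis by (rule int0_cont_zero[OF w0 wnn _ _ _ co that]) (use m1 L_def m1_def in auto)
      qed
      have geq: "g t - (1 + (-1/B)*t) = 0" if "t \<in> {0..m1}" for t
      proof (rule cont_zero_but_one[where a=0 and b=m1 and c=c and f="\<lambda>t. g t - (1 + (-1/B)*t)" and x=t])
        show "continuous_on {0..m1} (\<lambda>t. g t - (1 + (-1/B) * t))"
          by (intro continuous_intros continuous_on_subset[OF gco]) (use m1 in auto)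
        show "0 < m1" by (rule m1)
        show "t \<in> {0..m1}" by (rule that)
        show "\<forall>t\<in>{0..m1}. t \<noteq> c \<longrightarrow> g t - (1 + (-1/B) * t) = 0"
        proof (intro ballI impI)
          fix s assume s: "s \<in> {0..m1}" "s \<noteq> c"
          have "1 - s/c \<noteq> 0" using s c0 by (simp add: field_simps)
          then have "g s ^ (n-1) = l s ^ (n-1)" using wz[OF s(1)] unfolding w_def using s c0 by simp
          then have "g s = l s" using lnn gnn p by (metis power_eq_imp_eq_base)
          then show "g s - (1 + (-1/B) * s) = 0" using lval[of s] s m1 by auto
        qed
      qed
      have bgB: "bg \<le> B"
      proof (rule ccontr)
        assume "\<not> bg \<le> B"
        then have "m1 = B" unfolding m1_def by simp
        then have "g B = 0" using geq[of B] B by simp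
        moreover have "g B > 0" using gpos[of B] \<open>\<not> bg \<le> B\<close> B by simp
        ultimately show False by simp
      qed
      have bgB': "bg = B"
      proof (rule ccontr)
        assume "bg \<noteq> B" then have lt: "bg < B" using bgB by simp
        define \<alpha> where "\<alpha> = (bg + B)/2"
        have co: "continuous_on {\<alpha>..B} w"
        proof -
          have "continuous_on {\<alpha>..B} (\<lambda>t. (0 - l t ^ (n-1)) * (1 - t/c))"
            by (intro continuous_intros continuous_on_subset[OF lco']) (use lt bg c0 \<alpha>_def in auto)
          then show ?thesis
            by (rule continuous_on_cong[THEN iffD1, OF refl, rotated]) (use gout lt \<alpha>_def w_def n in \<open>auto simp: power_0_left\<close>)
        qed
        define x where "x = (\<alpha> + B)/2"
        have x: "x \<in> {\<alpha>..B}" "x < B" "bg < x" using lt unfolding x_def \<alpha>_def by (auto simp: field_simps)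
        have "w x = 0"
          by (rule int0_cont_zero[OF w0 wnn _ _ _ co x(1)]) (use lt bg \<alpha>_def L_def in auto)
        moreover have "w x > 0"
        proof -
          have "l x > 0" using lpos[of x] x bg blB by auto
          then have "l x ^ (n-1) > 0" by simp
          moreover have "1 - x/c < 0" using x cbg c0 by (simp add: field_simps)
          moreover have "g x = 0" using gout x by auto
          ultimately have "(0 - l x ^ (n-1)) * (1 - x/c) > 0" by (intro mult_neg_neg) auto
          then show ?thesis unfolding w_def using \<open>g x = 0\<close> n by (simp add: power_0_left)
        qed
        ultimately show False by simp
      qed
      show "supp_pos g = {0..B} \<and> (\<forall>t\<in>{0..B}. g t = 1 + (-1/B)*t)"
        using gsp bgB' geq m1_def by auto
    qed
    then show ?thesis using W(1) by simp
  qed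
  then show ?thesis unfolding l_def by simp
qed

lemma supp_lin: "supp_pos (lin c B) \<subseteq> {0..B}"
  unfolding supp_pos_def by (rule closure_minimal) (auto simp: lin_def split: if_splits)

lemma pn: "n \<ge> 2 \<Longrightarrow> (real (n-1) + 1) * (real (n-1) + 2) = real n * (real n + 1)"
  by (simp add: of_nat_diff)

theorem lemma5:
  fixes M m :: real and n :: nat
  assumes "M > 0" and "n \<ge> 2"
  shows "(H_class M m n \<noteq> {} \<longleftrightarrow> m \<ge> - 1 / sqrt (M * real n * (real n + 1)))
    \<and> (m \<ge> - 1 / sqrt (M * real n * (real n + 1)) \<longrightarrow>
        (\<exists>h\<in>H_class M m n. \<forall>g\<in>H_class M m n. mu n h \<le> mu n g)
      \<and> (\<forall>h\<in>H_class M m n. (\<forall>g\<in>H_class M m n. mu n h \<le> mu n g) \<longleftrightarrow>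
           (\<exists>b a c. supp_pos h = {0..b} \<and> (\<forall>t\<in>{0..b}. h t = a + c * t) \<and> h b = 0))
      \<and> (\<exists>h\<in>H_class M m n. \<forall>g\<in>H_class M m n. mu n g \<le> mu n h)
      \<and> (\<forall>h\<in>H_class M m n. (\<forall>g\<in>H_class M m n. mu n g \<le> mu n h) \<longleftrightarrow>
           (\<forall>t\<in>supp_pos h. h t = 1 + m * t)))"
proof -
  note M = assms(1) and n = assms(2)
  define K where "K = M * real n * (real n + 1)"
  define B0 where "B0 = sqrt K"
  have K: "K > 0" using M n by (simp add: K_def)
  have B0: "B0 > 0" using K by (simp add: B0_def)
  have B0sq: "B0^2 = K" using K by (simp add: B0_def)
  have Kn: "K = M * (real n * (real n + 1))" by (simp add: K_def)
  have nn1: "real n * (real n + 1) > 0" using n by simp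
  have intmin: "((\<lambda>t. t * (1 + (-1/B)*t)^(n-1)) has_integral B^2 / (real n * (real n + 1))) {0..B}"
    if "B > 0" for B using int_min[OF that, of "n-1"] pn[OF n] by simp
  have lclass: "lin (-1/B0) B0 \<in> H_class M m n" if mm: "m \<ge> -1/B0"
  proof (rule lin_class[OF B0])
    show "1 + (-1/B0) * t > 0" if "t \<in> {0..<B0}" for t using that B0 by (simp add: field_simps)
    show "1 + (-1/B0) * B0 \<ge> 0" using B0 by simp
    show "-1/B0 \<le> m" by (rule mm)
    have "B0^2 / (real n * (real n + 1)) = M" using B0sq Kn nn1 by (simp add: field_simps)
    then show "((\<lambda>t. t * (1 + (-1/B0)*t)^(n-1)) has_integral M) {0..B0}" using intmin[OF B0] by simp
  qed
  have nec: "m \<ge> -1/B0" if hH: "h \<in> H_class M m n" for h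
  proof (cases "m \<ge> 0")
    case True
    have "-1/B0 < 0" using B0 by simp
    then show ?thesis using True by linarith
  next
    case False
    then have m0: "m < 0" by simp
    obtain b where b: "b > 0" and hsp: "supp_pos h = {0..b}" and hco: "continuous_on {0..b} h"
      and hcc: "concave_on {0..b} h" and h0: "h 0 = 1"
      and hnn: "\<And>t. h t \<ge> 0" and hout: "\<And>t. t \<notin> {0..b} \<Longrightarrow> h t = 0"
      and hup: "\<And>t. t \<in> {0..b} \<Longrightarrow> h t \<le> 1 + m * t"
      and hpos: "\<And>t. t \<in> {0..<b} \<Longrightarrow> h t > 0"
      and hiM: "((\<lambda>t. t * h t ^ (n-1)) has_integral M) {0..b}"
      and himu: "((\<lambda>t. h t ^ (n-1)) has_integral mu n h) {0..b}"
      by (rule class_D[OF hH n]) blast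
    have "1 + m*b \<ge> 0" using hup[of b] hnn[of b] b by auto
    then have bm: "b \<le> -1/m" using m0 by (simp add: field_simps)
    define f where "f = (\<lambda>t. t * (1 + m*t)^(n-1))"
    have cf: "continuous_on S f" for S unfolding f_def by (intro continuous_intros)
    have "M \<le> integral {0..b} f"
    proof (rule has_integral_le[OF hiM])
      show "(f has_integral integral {0..b} f) {0..b}" using integrable_continuous_real[OF cf] by blast
      fix t assume t: "t \<in> {0..b}"
      have "h t ^ (n-1) \<le> (1 + m*t)^(n-1)" using hup[OF t] hnn by (intro power_mono) auto
      then show "t * h t ^ (n-1) \<le> f t" unfolding f_def using t by (simp add: mult_left_mono)
    qed
    also have "\<dots> \<le> integral {0..-1/m} f"
    proof (rule integral_subset_le)
      show "{0..b} \<subseteq> {0..-1/m}" using bm by auto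
      show "f integrable_on {0..b}" "f integrable_on {0..-1/m}" using integrable_continuous_real[OF cf] by auto
      show "\<forall>x\<in>{0..-1/m}. 0 \<le> f x"
      proof
        fix x assume x: "x \<in> {0..-1/m}"
        then have "1 + m * x \<ge> 0" using m0 by (simp add: field_simps)
        then show "0 \<le> f x" unfolding f_def using x by simp
      qed
    qed
    also have "\<dots> = 1 / (m^2 * (real (n-1) + 1) * (real (n-1) + 2))"
      using int_neg[OF m0, of "n-1"] unfolding f_def by (simp add: integral_unique)
    also have "\<dots> = 1 / (m^2 * (real n * (real n + 1)))" using pn[OF n] by (simp add: mult.assoc)
    finally have Mle: "M \<le> 1 / (m^2 * (real n * (real n + 1)))" .
    have "m^2 * (real n * (real n + 1)) > 0" using m0 nn1 by simp
    then have "M * (m^2 * (real n * (real n + 1))) \<le> 1" using Mle by (simp add: pos_le_divide_eq)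
    then have "m^2 * K \<le> 1" unfolding Kn by (simp add: algebra_simps)
    then have "sqrt (m^2 * K) \<le> 1" by simp
    then have "(-m) * B0 \<le> 1" unfolding B0_def using m0 by (simp add: real_sqrt_mult)
    then show ?thesis using B0 by (simp add: field_simps)
  qed
  have part1: "H_class M m n \<noteq> {} \<longleftrightarrow> m \<ge> -1/B0"
    using nec lclass by blast
  have part2: "(\<exists>h\<in>H_class M m n. \<forall>g\<in>H_class M m n. mu n h \<le> mu n g)
      \<and> (\<forall>h\<in>H_class M m n. (\<forall>g\<in>H_class M m n. mu n h \<le> mu n g) \<longleftrightarrow>
           (\<exists>b a c. supp_pos h = {0..b} \<and> (\<forall>t\<in>{0..b}. h t = a + c * t) \<and> h b = 0))
      \<and> (\<exists>h\<in>H_class M m n. \<forall>g\<in>H_class M m n. mu n g \<le> mu n h)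
      \<and> (\<forall>h\<in>H_class M m n. (\<forall>g\<in>H_class M m n. mu n g \<le> mu n h) \<longleftrightarrow>
           (\<forall>t\<in>supp_pos h. h t = 1 + m * t))" if mm: "m \<ge> -1/B0"
  proof -
    define l where "l = lin (-1/B0) B0"
    have lH: "l \<in> H_class M m n" using lclass[OF mm] l_def by simp
    have PA: "mu n l \<le> mu n g \<and> (mu n g = mu n l \<longrightarrow> supp_pos g = {0..B0} \<and> (\<forall>t\<in>{0..B0}. g t = 1 + (-1/B0)*t))"
      if "g \<in> H_class M m n" for g
      using pairA[OF n B0 lclass[OF mm] that] unfolding l_def by simp
    have mm': "m \<ge> - 1 / sqrt (M * real n * (real n + 1))" using mm unfolding B0_def K_def .
    obtain B1 where B1: "B1 > 0" "\<And>t. t \<in> {0..<B1} \<Longrightarrow> 1 + m * t > 0" "1 + m * B1 \<ge> 0"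
      "((\<lambda>t. t * (1 + m*t)^(n-1)) has_integral M) {0..B1}"
      using exists_B1[OF M n mm'] by blast
    define G where "G = lin m B1"
    have GH: "G \<in> H_class M m n" unfolding G_def by (rule lin_class[OF B1(1) B1(2) B1(3) order_refl B1(4)])
    have Gl: "\<forall>t\<in>supp_pos G. G t = 1 + m * t"
      using supp_lin[of m B1] unfolding G_def by (auto simp: lin_def)
    have minchar: "(\<forall>g\<in>H_class M m n. mu n h \<le> mu n g) \<longleftrightarrow>
           (\<exists>b a c. supp_pos h = {0..b} \<and> (\<forall>t\<in>{0..b}. h t = a + c * t) \<and> h b = 0)"
      if hH: "h \<in> H_class M m n" for h
    proof
      assume "\<forall>g\<in>H_class M m n. mu n h \<le> mu n g"
      then have "mu n h \<le> mu n l" using lH by blast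
      moreover have "mu n l \<le> mu n h" using PA[OF hH] by simp
      ultimately have "mu n h = mu n l" by simp
      then have "supp_pos h = {0..B0} \<and> (\<forall>t\<in>{0..B0}. h t = 1 + (-1/B0)*t)" using PA[OF hH] by simp
      moreover have "1 + (-1/B0)*B0 = 0" using B0 by simp
      ultimately show "\<exists>b a c. supp_pos h = {0..b} \<and> (\<forall>t\<in>{0..b}. h t = a + c * t) \<and> h b = 0"
        using B0 by (intro exI[of _ B0] exI[of _ 1] exI[of _ "-1/B0"]) auto
    next
      assume "\<exists>b a c. supp_pos h = {0..b} \<and> (\<forall>t\<in>{0..b}. h t = a + c * t) \<and> h b = 0"
      then obtain b a c where sp: "supp_pos h = {0..b}" and af: "\<forall>t\<in>{0..b}. h t = a + c * t" and hb: "h b = 0"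
        by blast
      obtain bh where bh: "bh > 0" and hsp: "supp_pos h = {0..bh}" and hco: "continuous_on {0..bh} h"
        and hcc: "concave_on {0..bh} h" and h0: "h 0 = 1"
        and hnn: "\<And>t. h t \<ge> 0" and hout: "\<And>t. t \<notin> {0..bh} \<Longrightarrow> h t = 0"
        and hup: "\<And>t. t \<in> {0..bh} \<Longrightarrow> h t \<le> 1 + m * t"
        and hpos: "\<And>t. t \<in> {0..<bh} \<Longrightarrow> h t > 0"
        and hiM: "((\<lambda>t. t * h t ^ (n-1)) has_integral M) {0..bh}"
        and himu: "((\<lambda>t. h t ^ (n-1)) has_integral mu n h) {0..bh}"
        by (rule class_D[OF hH n]) blast
      have bb: "b = bh"
      proof -
        have "{0..b} = {0..bh}" using sp hsp by (simp only:)
        then have "bh \<in> {0..b}" "b \<in> {0..bh}" using bh by auto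
        then show ?thesis by simp
      qed
      have a1: "a = 1" using af h0 bh bb by force
      have cb: "c = -1/b" using af hb bh bb a1 by (auto simp: field_simps)
      have hv: "h t = 1 + (-1/b) * t" if "t \<in> {0..b}" for t using af that a1 cb by simp
      have b0: "b > 0" using bh bb by simp
      have "((\<lambda>t. t * h t ^ (n-1)) has_integral b^2 / (real n * (real n + 1))) {0..b}"
      proof -
        have "((\<lambda>t. t * h t ^ (n-1)) has_integral b^2 / (real n * (real n + 1))) {0..b} \<longleftrightarrow>
          ((\<lambda>t. t * (1 + (-1/b)*t)^(n-1)) has_integral b^2 / (real n * (real n + 1))) {0..b}"
          by (rule has_integral_cong) (simp add: hv)
        then show ?thesis using intmin[OF b0] by simp
      qed
      then have "M = b^2 / (real n * (real n + 1))" using hiM bb by (simp add: has_integral_unique)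
      then have "M * (real n * (real n + 1)) = b^2" using nn1 by (simp add: field_simps)
      then have "b^2 = K" using Kn by simp
      then have bB0: "b = B0" unfolding B0_def using b0 by (simp add: real_sqrt_unique)
      have "h = l"
      proof
        fix t show "h t = l t"
        proof (cases "t \<in> {0..B0}")
          case True then show ?thesis using hv bB0 by (simp add: l_def lin_def)
        next
          case False then show ?thesis using hout bb bB0 by (auto simp: l_def lin_def)
        qed
      qed
      then show "\<forall>g\<in>H_class M m n. mu n h \<le> mu n g" using PA by simp
    qed
    have maxchar: "(\<forall>g\<in>H_class M m n. mu n g \<le> mu n h) \<longleftrightarrow> (\<forall>t\<in>supp_pos h. h t = 1 + m * t)"
      if hH: "h \<in> H_class M m n" for h
    proof
      assume "\<forall>g\<in>H_class M m n. mu n g \<le> mu n h"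
      then have "mu n G \<le> mu n h" using GH by blast
      moreover have "mu n h \<le> mu n G" using pairB(1)[OF n GH Gl hH] .
      ultimately show "\<forall>t\<in>supp_pos h. h t = 1 + m * t" using pairB(2)[OF n GH Gl hH] by simp
    next
      assume "\<forall>t\<in>supp_pos h. h t = 1 + m * t"
      then show "\<forall>g\<in>H_class M m n. mu n g \<le> mu n h" using pairB(1)[OF n hH] by blast
    qed
    show ?thesis
    proof (intro conjI)
      show "\<exists>h\<in>H_class M m n. \<forall>g\<in>H_class M m n. mu n h \<le> mu n g" using lH PA by blast
      show "\<exists>h\<in>H_class M m n. \<forall>g\<in>H_class M m n. mu n g \<le> mu n h"
        using GH pairB(1)[OF n GH Gl] by blast
    qed (use minchar maxchar in blast)+
  qed
  show ?thesis using part1 part2 unfolding B0_def K_def by blast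
qed

end
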